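(* Let $\boldsymbol\Sigma$ be a stacky fan with fan $\Sigma$, and let $\sigma\in\Sigma$. Then, as subsets of $X(\widetilde\Sigma)$, $\widetilde L_\sigma=\mathbb{V}(\widetilde I_\sigma)\cap X(\widetilde\Sigma)$.
   Context: Work over $\mathbb{C}$. A stacky fan $\boldsymbol\Sigma=(N,\Sigma,(v_1,\dots,v_n))$ consists of a finitely generated abelian group $N$, a fan $\Sigma$ in $N_{\mathbb{R}}$ with rays $\rho_1,\dots,\rho_n$ spanning $N_{\mathbb{R}}$, and $v_i\in N$ with image on $\rho_i$. Let $\bar N=N/\mathrm{torsion}$ and $X(\Sigma)$ the toric variety of $\Sigma$; for a cone $\sigma$, $V(\sigma)$ is the closure of the torus orbit of the distinguished point $\gamma_\sigma$. With $x^{\hat\sigma}=\prod_{\rho_i\notin\sigma(1)}x_i$ and $Z_\Sigma=\mathbb{V}(x^{\hat\sigma}:\sigma\in\Sigma)\subset\mathbb{A}^n$, the Cox space is $X(\widetilde\Sigma)=\mathbb{A}^n\smallsetminus Z_\Sigma$, and $q:X(\widetilde\Sigma)\to X(\Sigma)$ is the toric morphism induced by $\mathbb{Z}^n\to\bar N$, $e_i\mapsto$ image of $v_i$ (a good quotient for the group $G_{\boldsymbol\Sigma}$). Define $\widetilde L_\sigma=q^{-1}(V(\sigma))$. For a cone $\mu\in\Sigma$ containing $\sigma$, let $\widetilde I_{\mu,\sigma}\subset\mathbb{C}[x_1,\dots,x_n]$ be the ideal generated by the monomials $x^{\hat\tau}_\mu=\prod_{\rho_i\in\mu(1)\smallsetminus\tau(1)}x_i$,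 where $\tau$ runs over all proper faces of $\mu$ not containing $\sigma$. Let $\widetilde I_\sigma=\bigcap_{\mu\in\Sigma,\ \mu\supseteq\sigma}\widetilde I_{\mu,\sigma}$. *)

theory Defs
  imports "HOL-Analysis.Analysis" "HOL-Library.Poly_Mapping"
begin

text \<open>The lattice Nbar = N/torsion is identified with int^'d; the dual lattice M is int^'d
  with the standard pairing. v i is the image in Nbar of the stacky-fan vector v_i.\<close>

definition pair :: "int ^ 'd \<Rightarrow> int ^ 'd \<Rightarrow> int" where
  "pair m u = (\<Sum>j\<in>UNIV. m $ j * u $ j)"

definition rvec :: "int ^ 'd \<Rightarrow> real ^ 'd" where
  "rvec u = (\<chi> j. real_of_int (u $ j))"

definition cone_of :: "(nat \<Rightarrow> int ^ 'd) \<Rightarrow> nat set \<Rightarrow> (real ^ 'd) set" where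
  "cone_of v S = {(\<Sum>i\<in>S. c i *\<^sub>R rvec (v i)) | c. \<forall>i\<in>S. c i \<ge> 0}"

text \<open>A stacky fan, recorded by: n rays, the images v i (i < n) in Nbar, and the fan Sig,
  each cone being recorded by the set of indices of its rays.\<close>
definition stacky_fan :: "nat \<Rightarrow> (nat \<Rightarrow> int ^ 'd) \<Rightarrow> nat set set \<Rightarrow> bool" where
  "stacky_fan n v Sig \<longleftrightarrow>
     (\<forall>S\<in>Sig. S \<subseteq> {..<n}) \<and>
     (\<forall>S\<in>Sig. cone_of v S \<inter> uminus ` cone_of v S = {0}) \<and>
     (\<forall>S\<in>Sig. \<forall>F. F face_of cone_of v S \<and> F \<noteq> {} \<longrightarrow> (\<exists>T\<in>Sig. cone_of v T = F)) \<and>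
     (\<forall>S\<in>Sig. \<forall>T\<in>Sig. (cone_of v S \<inter> cone_of v T) face_of cone_of v S
                       \<and> (cone_of v S \<inter> cone_of v T) face_of cone_of v T) \<and>
     (\<forall>i<n. v i \<noteq> 0 \<and> {i} \<in> Sig) \<and>
     (\<forall>i<n. \<forall>j<n. i \<noteq> j \<longrightarrow> cone_of v {i} \<noteq> cone_of v {j}) \<and>
     (\<forall>S\<in>Sig. aff_dim (cone_of v S) = 1 \<longrightarrow> (\<exists>i<n. cone_of v S = cone_of v {i})) \<and>
     (\<forall>S\<in>Sig. \<forall>i<n. cone_of v {i} face_of cone_of v S \<longleftrightarrow> i \<in> S) \<and>
     span (rvec ` v ` {..<n}) = UNIV"

definition semig :: "(nat \<Rightarrow> int ^ 'd) \<Rightarrow> nat set \<Rightarrow> (int ^ 'd) set" where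
  "semig v S = {m. \<forall>i\<in>S. pair m (v i) \<ge> 0}"

text \<open>Points of U_sigma: monoid homomorphisms (semig, +) \<rightarrow> (C, *), extended by 0.\<close>
definition Uset :: "(nat \<Rightarrow> int ^ 'd) \<Rightarrow> nat set \<Rightarrow> (int ^ 'd \<Rightarrow> complex) set" where
  "Uset v S = {g. g 0 = 1 \<and>
      (\<forall>m\<in>semig v S. \<forall>m'\<in>semig v S. g (m + m') = g m * g m') \<and>
      (\<forall>m. m \<notin> semig v S \<longrightarrow> g m = 0)}"

definition Dunion :: "(nat \<Rightarrow> int ^ 'd) \<Rightarrow> nat set set \<Rightarrow> (nat set \<times> (int ^ 'd \<Rightarrow> complex)) set" where
  "Dunion v Sig = {(S, g). S \<in> Sig \<and> g \<in> Uset v S}"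

text \<open>Gluing: two chart points are the same point of X(Sigma) iff both come from a point of
  U_(sigma \<inter> sigma').\<close>
definition glue :: "(nat \<Rightarrow> int ^ 'd) \<Rightarrow> nat set \<times> (int ^ 'd \<Rightarrow> complex)
                    \<Rightarrow> nat set \<times> (int ^ 'd \<Rightarrow> complex) \<Rightarrow> bool" where
  "glue v p p' \<longleftrightarrow> (\<exists>g''\<in>Uset v (fst p \<inter> fst p').
      (\<forall>m\<in>semig v (fst p). snd p m = g'' m) \<and> (\<forall>m\<in>semig v (fst p'). snd p' m = g'' m))"

definition saturated :: "(nat \<Rightarrow> int ^ 'd) \<Rightarrow> nat set set
                         \<Rightarrow> (nat set \<times> (int ^ 'd \<Rightarrow> complex)) set \<Rightarrow> bool" where
  "saturated v Sig C \<longleftrightarrow> (\<forall>p\<in>C. \<forall>p'\<in>Dunion v Sig. glue v p p' \<longrightarrow> p' \<in> C)"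

text \<open>Closed subsets of X(Sigma) (classical topology), represented by their saturated
  preimages in the disjoint union of charts; each chart carries the topology of
  pointwise convergence.\<close>
definition closedX :: "(nat \<Rightarrow> int ^ 'd) \<Rightarrow> nat set set
                       \<Rightarrow> (nat set \<times> (int ^ 'd \<Rightarrow> complex)) set \<Rightarrow> bool" where
  "closedX v Sig C \<longleftrightarrow> C \<subseteq> Dunion v Sig \<and> saturated v Sig C \<and>
     (\<forall>S\<in>Sig. closedin (top_of_set (Uset v S)) {g. (S, g) \<in> C})"

text \<open>Characters of M, i.e. points of the torus T_N = Hom(M, C^*).\<close>
definition torus_pt :: "(int ^ 'd \<Rightarrow> complex) \<Rightarrow> bool" where
  "torus_pt t \<longleftrightarrow> (\<forall>m. t m \<noteq> 0) \<and> (\<forall>m m'. t (m + m') = t m * t m')"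

definition gamma_dist :: "(nat \<Rightarrow> int ^ 'd) \<Rightarrow> nat set \<Rightarrow> int ^ 'd \<Rightarrow> complex" where
  "gamma_dist v S m = (if m \<in> semig v S \<and> (\<forall>i\<in>S. pair m (v i) = 0) then 1 else 0)"

definition orbit_pts :: "(nat \<Rightarrow> int ^ 'd) \<Rightarrow> nat set set \<Rightarrow> nat set
                         \<Rightarrow> (nat set \<times> (int ^ 'd \<Rightarrow> complex)) set" where
  "orbit_pts v Sig S = {p \<in> Dunion v Sig. \<exists>t. torus_pt t \<and>
      glue v p (S, \<lambda>m. t m * gamma_dist v S m)}"

definition Vorb :: "(nat \<Rightarrow> int ^ 'd) \<Rightarrow> nat set set \<Rightarrow> nat set
                    \<Rightarrow> (nat set \<times> (int ^ 'd \<Rightarrow> complex)) set" where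
  "Vorb v Sig S = \<Inter>{C. closedX v Sig C \<and> orbit_pts v Sig S \<subseteq> C}"

text \<open>Points of A^n are functions nat \<Rightarrow> complex vanishing at indices \<ge> n.\<close>
definition Cox :: "nat \<Rightarrow> nat set set \<Rightarrow> (nat \<Rightarrow> complex) set" where
  "Cox n Sig = {x. (\<forall>i\<ge>n. x i = 0) \<and> (\<exists>S\<in>Sig. (\<Prod>i\<in>{..<n} - S. x i) \<noteq> 0)}"

text \<open>q on the chart U_(sigma-tilde) = {x : x_i \<noteq> 0 for rho_i not in sigma}.\<close>
definition qchart :: "nat \<Rightarrow> (nat \<Rightarrow> int ^ 'd) \<Rightarrow> nat set \<Rightarrow> (nat \<Rightarrow> complex)
                      \<Rightarrow> int ^ 'd \<Rightarrow> complex" where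
  "qchart n v S x m = (if m \<in> semig v S then (\<Prod>i<n. x i powi pair m (v i)) else 0)"

definition Ltilde :: "nat \<Rightarrow> (nat \<Rightarrow> int ^ 'd) \<Rightarrow> nat set set \<Rightarrow> nat set \<Rightarrow> (nat \<Rightarrow> complex) set" where
  "Ltilde n v Sig S = {x \<in> Cox n Sig. \<exists>T\<in>Sig. (\<forall>i\<in>{..<n} - T. x i \<noteq> 0) \<and>
       (T, qchart n v T x) \<in> Vorb v Sig S}"

type_synonym mpoly = "(nat \<Rightarrow>\<^sub>0 nat) \<Rightarrow>\<^sub>0 complex"

definition polys :: "nat \<Rightarrow> mpoly set" where
  "polys n = {p. \<forall>a\<in>Poly_Mapping.keys p. \<forall>i\<in>Poly_Mapping.keys a. i < n}"

definition peval :: "mpoly \<Rightarrow> (nat \<Rightarrow> complex) \<Rightarrow> complex" where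
  "peval p x = (\<Sum>a\<in>Poly_Mapping.keys p. Poly_Mapping.lookup p a * (\<Prod>i\<in>Poly_Mapping.keys a. x i ^ Poly_Mapping.lookup a i))"

definition monom_set :: "nat set \<Rightarrow> mpoly" where
  "monom_set A = Poly_Mapping.single (\<Sum>i\<in>A. Poly_Mapping.single i 1) 1"

definition gen_ideal :: "nat \<Rightarrow> mpoly set \<Rightarrow> mpoly set" where
  "gen_ideal n G = {(\<Sum>g\<in>F. r g * g) | F r. finite F \<and> F \<subseteq> G \<and> (\<forall>g. r g \<in> polys n)}"

definition zero_set :: "mpoly set \<Rightarrow> (nat \<Rightarrow> complex) set" where
  "zero_set J = {x. \<forall>p\<in>J. peval p x = 0}"

definition Imu :: "nat \<Rightarrow> (nat \<Rightarrow> int ^ 'd) \<Rightarrow> nat set set \<Rightarrow> nat set \<Rightarrow> nat set \<Rightarrow> mpoly set" where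
  "Imu n v Sig M S = gen_ideal n {monom_set (M - T) | T. T \<in> Sig \<and>
      cone_of v T face_of cone_of v M \<and> cone_of v T \<noteq> cone_of v M \<and>
      \<not> cone_of v S \<subseteq> cone_of v T}"

definition Itilde :: "nat \<Rightarrow> (nat \<Rightarrow> int ^ 'd) \<Rightarrow> nat set set \<Rightarrow> nat set \<Rightarrow> mpoly set" where
  "Itilde n v Sig S = polys n \<inter> (\<Inter>M\<in>{M\<in>Sig. cone_of v S \<subseteq> cone_of v M}. Imu n v Sig M S)"

end

theory Submission
  imports Defs
begin

lemma peval_superset:
  assumes "finite K" "Poly_Mapping.keys p \<subseteq> K"
  shows "peval p x = (\<Sum>a\<in>K. Poly_Mapping.lookup p a * (\<Prod>i\<in>Poly_Mapping.keys a. x i ^ Poly_Mapping.lookup a i))"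
  unfolding peval_def
  by (rule sum.mono_neutral_left) (use assms in \<open>auto simp: in_keys_iff\<close>)

lemma peval_add: "peval (p + q) x = peval p x + peval q x"
proof -
  let ?K = "Poly_Mapping.keys p \<union> Poly_Mapping.keys q"
  have f: "finite ?K" by simp
  have "peval (p+q) x = (\<Sum>a\<in>?K. Poly_Mapping.lookup (p+q) a * (\<Prod>i\<in>Poly_Mapping.keys a. x i ^ Poly_Mapping.lookup a i))"
    by (rule peval_superset[OF f]) (use keys_add[of p q] in auto)
  also have "\<dots> = peval p x + peval q x"
    by (simp add: peval_superset[OF f, of p] peval_superset[OF f, of q] lookup_add distrib_right sum.distrib)
  finally show ?thesis .
qed

lemma peval_zero: "peval 0 x = 0"
  by (simp add: peval_def)

lemma peval_sum: "peval (\<Sum>g\<in>F. f g) x = (\<Sum>g\<in>F. peval (f g) x)"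
  by (induction F rule: infinite_finite_induct) (auto simp: peval_zero peval_add)

lemma peval_vanish:
  assumes "x i0 = 0" "\<forall>a\<in>Poly_Mapping.keys p. Poly_Mapping.lookup a i0 > 0"
  shows "peval p x = 0"
  unfolding peval_def
proof (rule sum.neutral, intro ballI)
  fix a assume a: "a \<in> Poly_Mapping.keys p"
  then have "i0 \<in> Poly_Mapping.keys a" using assms(2) by (auto simp: in_keys_iff)
  moreover have "x i0 ^ Poly_Mapping.lookup a i0 = 0" using assms a by auto
  ultimately have "(\<Prod>i\<in>Poly_Mapping.keys a. x i ^ Poly_Mapping.lookup a i) = 0"
    by (meson finite_keys prod_zero)
  then show "Poly_Mapping.lookup p a * (\<Prod>i\<in>Poly_Mapping.keys a. x i ^ Poly_Mapping.lookup a i) = 0" by simp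
qed

lemma lookup_indsum: "finite A \<Longrightarrow> Poly_Mapping.lookup (\<Sum>i\<in>A. Poly_Mapping.single i (1::nat)) j = (if j \<in> A then 1 else 0)"
  unfolding lookup_sum lookup_single when_def by (simp add: sum.delta)

lemma keys_indsum: "finite A \<Longrightarrow> Poly_Mapping.keys (\<Sum>i\<in>A. Poly_Mapping.single i (1::nat)) = A"
  by (auto simp del: One_nat_def simp: in_keys_iff lookup_indsum split: if_splits)

lemma peval_monom_set: "finite A \<Longrightarrow> peval (monom_set A) x = (\<Prod>i\<in>A. x i)"
  unfolding peval_def monom_set_def
  by (simp del: One_nat_def add: keys_indsum lookup_indsum)

lemma monom_set_polys: "A \<subseteq> {..<n} \<Longrightarrow> finite A \<Longrightarrow> monom_set A \<in> polys n"
  by (auto simp del: One_nat_def simp: polys_def monom_set_def keys_indsum)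

lemma monom_set_union: "finite A \<Longrightarrow> finite B \<Longrightarrow> A \<inter> B = {} \<Longrightarrow>
   monom_set (A \<union> B) = monom_set A * monom_set B"
  by (simp add: monom_set_def mult_single sum.union_disjoint)

lemma mult_monom_vanish:
  assumes "finite A" "i0 \<in> A"
  shows "\<forall>a\<in>Poly_Mapping.keys (r * monom_set A). Poly_Mapping.lookup a i0 > 0"
proof
  fix a assume "a \<in> Poly_Mapping.keys (r * monom_set A)"
  then obtain b c where "a = b + c" "c \<in> Poly_Mapping.keys (monom_set A)"
    using keys_mult by blast
  then have "c = (\<Sum>i\<in>A. Poly_Mapping.single i 1)" by (simp add: monom_set_def)
  then show "Poly_Mapping.lookup a i0 > 0" using \<open>a = b + c\<close> assms
    by (simp del: One_nat_def add: lookup_add lookup_indsum)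
qed

lemma gen_ideal_vanish:
  assumes "\<forall>g\<in>G. \<exists>A i0. g = monom_set A \<and> finite A \<and> i0 \<in> A \<and> x i0 = 0" "p \<in> gen_ideal n G"
  shows "peval p x = 0"
proof -
  obtain F r where p: "p = (\<Sum>g\<in>F. r g * g)" "F \<subseteq> G" using assms(2) by (auto simp: gen_ideal_def)
  have "peval (r g * g) x = 0" if gF: "g \<in> F" for g
  proof -
    obtain A i0 where "g = monom_set A" "finite A" "i0 \<in> A" "x i0 = 0" using assms(1) p(2) gF by blast
    then show ?thesis using peval_vanish mult_monom_vanish by metis
  qed
  then show ?thesis by (simp add: p peval_sum)
qed

lemma cone_of_hull:
  assumes "finite T"
  shows "cone_of v T = convex_cone hull (rvec ` v ` T)"
proof
  show "cone_of v T \<subseteq> convex_cone hull (rvec ` v ` T)"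
  proof
    fix y assume "y \<in> cone_of v T"
    then obtain c where y: "y = (\<Sum>i\<in>T. c i *\<^sub>R rvec (v i))" and c: "\<forall>i\<in>T. c i \<ge> 0"
      by (auto simp: cone_of_def)
    have "(\<Sum>i\<in>T'. c i *\<^sub>R rvec (v i)) \<in> convex_cone hull (rvec ` v ` T)" if "T' \<subseteq> T" for T'
      using finite_subset[OF that assms] that
    proof (induction T' rule: finite_induct)
      case empty then show ?case by (simp add: convex_cone_hull_contains_0)
    next
      case (insert i T')
      have "rvec (v i) \<in> convex_cone hull (rvec ` v ` T)" using insert by (intro hull_inc) auto
      then have "c i *\<^sub>R rvec (v i) \<in> convex_cone hull (rvec ` v ` T)"
        using c insert by (intro convex_cone_hull_mul) auto
      then show ?case using insert by (simp add: convex_cone_hull_add)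
    qed
    then show "y \<in> convex_cone hull (rvec ` v ` T)" using y by blast
  qed
next
  have cc: "convex_cone (cone_of v T)"
    unfolding convex_cone_iff
  proof (intro conjI ballI allI impI)
    show "0 \<in> cone_of v T" unfolding cone_of_def by (rule CollectI, rule exI[of _ "\<lambda>_. 0"]) auto
  next
    fix x y assume "x \<in> cone_of v T" "y \<in> cone_of v T"
    then obtain c d where "x = (\<Sum>i\<in>T. c i *\<^sub>R rvec (v i))" "\<forall>i\<in>T. c i \<ge> 0"
       "y = (\<Sum>i\<in>T. d i *\<^sub>R rvec (v i))" "\<forall>i\<in>T. d i \<ge> 0" by (auto simp: cone_of_def)
    then show "x + y \<in> cone_of v T" unfolding cone_of_def
      by (intro CollectI exI[of _ "\<lambda>i. c i + d i"]) (auto simp: scaleR_add_left sum.distrib)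
  next
    fix x and a :: real assume "x \<in> cone_of v T" "0 \<le> a"
    then obtain c where "x = (\<Sum>i\<in>T. c i *\<^sub>R rvec (v i))" "\<forall>i\<in>T. c i \<ge> 0" by (auto simp: cone_of_def)
    then show "a *\<^sub>R x \<in> cone_of v T" using \<open>0 \<le> a\<close> unfolding cone_of_def
      by (intro CollectI exI[of _ "\<lambda>i. a * c i"]) (auto simp: scaleR_sum_right)
  qed
  have "rvec ` v ` T \<subseteq> cone_of v T"
  proof
    fix y assume "y \<in> rvec ` v ` T"
    then obtain j where j: "j \<in> T" "y = rvec (v j)" by auto
    have "(\<Sum>i\<in>T. (if i = j then 1 else 0) *\<^sub>R rvec (v i)) = (\<Sum>i\<in>T. if i = j then rvec (v i) else 0)"
      by (rule sum.cong) auto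
    also have "\<dots> = rvec (v j)" using j assms by (simp add: sum.delta)
    finally show "y \<in> cone_of v T" unfolding cone_of_def
      by (intro CollectI exI[of _ "\<lambda>i. if i = j then 1 else 0"]) (use j in auto)
  qed
  then show "convex_cone hull (rvec ` v ` T) \<subseteq> cone_of v T"
    using cc by (intro hull_minimal) auto
qed

lemma cone_of_cc: "finite T \<Longrightarrow> convex_cone (cone_of v T)"
  by (simp add: cone_of_hull convex_cone_convex_cone_hull)

lemma cone_of_inc: "finite T \<Longrightarrow> i \<in> T \<Longrightarrow> rvec (v i) \<in> cone_of v T"
  by (simp add: cone_of_hull hull_inc)

lemma cone_of_0: "finite T \<Longrightarrow> 0 \<in> cone_of v T"
  by (simp add: cone_of_hull convex_cone_hull_contains_0)

lemma cone_of_mono: "finite T \<Longrightarrow> S \<subseteq> T \<Longrightarrow> cone_of v S \<subseteq> cone_of v T"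
  using finite_subset[of S T] by (simp add: cone_of_hull hull_mono image_mono)

lemma cone_of_min: "finite S \<Longrightarrow> convex_cone K \<Longrightarrow> (\<forall>j\<in>S. rvec (v j) \<in> K) \<Longrightarrow> cone_of v S \<subseteq> K"
  by (simp add: cone_of_hull hull_minimal image_subset_iff)

lemma real_expose:
  assumes "finite T" "F face_of cone_of v T" "F \<noteq> {}"
  shows "\<exists>u. (\<forall>y\<in>cone_of v T. u \<bullet> y \<ge> 0) \<and> F = cone_of v T \<inter> {y. u \<bullet> y = 0}"
proof -
  have "polyhedron (cone_of v T)" using assms(1) by (simp add: cone_of_hull polyhedron_convex_cone_hull)
  then have "F exposed_face_of cone_of v T" using assms(2) exposed_face_of_polyhedron by blast
  then obtain a b where ab: "cone_of v T \<subseteq> {x. a \<bullet> x \<le> b}" "F = cone_of v T \<inter> {x. a \<bullet> x = b}"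
    unfolding exposed_face_of_def by blast
  obtain y where y: "y \<in> F" using assms(3) by blast
  have "2 *\<^sub>R y \<in> cone_of v T" using y ab by (intro convex_cone_scaleR[OF cone_of_cc[OF assms(1)]]) auto
  then have "a \<bullet> (2 *\<^sub>R y) \<le> b" using ab by auto
  moreover have "a \<bullet> y = b" using y ab by auto
  moreover have "0 \<le> b" using cone_of_0[OF assms(1), of v] ab by auto
  ultimately have b: "b = 0" by (simp add: inner_scaleR_right)
  show ?thesis
    by (rule exI[of _ "-a"]) (use ab b in auto)
qed

definition Qv :: "real ^ 'd \<Rightarrow> bool" where "Qv q \<longleftrightarrow> (\<forall>j. q $ j \<in> \<rat>)"

lemma inner_rat: "Qv a \<Longrightarrow> Qv q \<Longrightarrow> a \<bullet> q \<in> \<rat>"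
  unfolding Qv_def inner_vec_def by (auto intro!: Rats_sum Rats_mult)

lemma rat_approx_base:
  fixes u :: "real ^ 'd"
  assumes "e > 0"
  shows "\<exists>q. Qv q \<and> norm (q - u) < e"
proof -
  define d where "d = e / real CARD('d)"
  have d: "d > 0" using assms by (simp add: d_def)
  have "\<forall>j. \<exists>r\<in>\<rat>. u $ j < r \<and> r < u $ j + d" using d by (intro allI Rats_dense_in_real) auto
  then obtain r where r: "\<And>j. r j \<in> \<rat> \<and> u $ j < r j \<and> r j < u $ j + d" by metis
  define q where "q = (\<chi> j. r j)"
  have "norm (q - u) \<le> (\<Sum>j\<in>UNIV. \<bar>(q - u) $ j\<bar>)" by (rule norm_le_l1_cart)
  also have "\<dots> < (\<Sum>j\<in>(UNIV::'d set). d)"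
  proof (rule sum_strict_mono)
    fix j :: 'd
    have "u $ j < r j" "r j < u $ j + d" using r[of j] by auto
    then show "\<bar>(q - u) $ j\<bar> < d" by (simp add: q_def)
  qed auto
  also have "\<dots> = e" by (simp add: d_def)
  finally have n: "norm (q - u) < e" .
  have "Qv q" using r by (simp add: Qv_def q_def)
  then show ?thesis using n by blast
qed

lemma rat_approx:
  fixes u :: "real ^ 'd"
  assumes "finite A" "\<forall>a\<in>A. Qv a" "\<forall>a\<in>A. a \<bullet> u = 0" "e > 0"
  shows "\<exists>q. Qv q \<and> (\<forall>a\<in>A. a \<bullet> q = 0) \<and> norm (q - u) < e"
  using assms
proof (induction A arbitrary: u e rule: finite_induct)
  case empty then show ?case using rat_approx_base by simp
next
  case (insert a A)
  show ?case
  proof (cases "\<forall>q. Qv q \<and> (\<forall>b\<in>A. b \<bullet> q = 0) \<longrightarrow> a \<bullet> q = 0")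
    case True
    obtain q where q: "Qv q" "\<forall>b\<in>A. b \<bullet> q = 0" "norm (q - u) < e"
      using insert.IH[of u e] insert.prems by (auto simp del: insert_iff)
    have "a \<bullet> q = 0" using True q by blast
    then show ?thesis using q by auto
  next
    case False
    then obtain w where w: "Qv w" "\<forall>b\<in>A. b \<bullet> w = 0" "a \<bullet> w \<noteq> 0" by blast
    define K where "K = 1 + norm a * (norm w / \<bar>a \<bullet> w\<bar>)"
    have K: "K \<ge> 1" unfolding K_def by (simp add: divide_nonneg_nonneg)
    have pA: "\<forall>a\<in>A. Qv a" "\<forall>a\<in>A. a \<bullet> u = 0" using insert.prems by simp_all
    have eK: "e / K > 0" using K insert.prems(3) by simp
    obtain q where q: "Qv q" "\<forall>b\<in>A. b \<bullet> q = 0" "norm (q - u) < e / K"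
      using insert.IH[OF pA eK] by blast
    define q' where "q' = q - ((a \<bullet> q) / (a \<bullet> w)) *\<^sub>R w"
    have Qa: "Qv a" using insert.prems(1) by simp
    have "a \<bullet> q \<in> \<rat>" using inner_rat[OF Qa q(1)] .
    moreover have "a \<bullet> w \<in> \<rat>" using inner_rat[OF Qa w(1)] .
    ultimately have "(a \<bullet> q) / (a \<bullet> w) \<in> \<rat>" by (rule Rats_divide)
    then have "Qv q'" using q w unfolding Qv_def q'_def
    proof (intro allI)
      fix j
      assume c: "(a \<bullet> q) / (a \<bullet> w) \<in> \<rat>" and qq: "\<forall>j. q $ j \<in> \<rat>" and ww: "\<forall>j. w $ j \<in> \<rat>"
      have "(q - ((a \<bullet> q) / (a \<bullet> w)) *\<^sub>R w) $ j = q $ j - ((a \<bullet> q) / (a \<bullet> w)) * w $ j" by simp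
      also have "\<dots> \<in> \<rat>" using c qq ww by (intro Rats_diff Rats_mult) auto
      finally show "(q - ((a \<bullet> q) / (a \<bullet> w)) *\<^sub>R w) $ j \<in> \<rat>" .
    qed
    moreover have "\<forall>b\<in>insert a A. b \<bullet> q' = 0"
    proof
      fix b assume "b \<in> insert a A"
      then show "b \<bullet> q' = 0"
      proof
        assume "b = a" then show ?thesis using w(3) by (simp add: q'_def inner_diff_right)
      next
        assume "b \<in> A" then show ?thesis using q(2) w(2) by (simp add: q'_def inner_diff_right)
      qed
    qed
    moreover have "norm (q' - u) < e"
    proof -
      have "a \<bullet> u = 0" using insert.prems(2) by simp
      then have "\<bar>a \<bullet> q\<bar> = \<bar>a \<bullet> (q - u)\<bar>" by (simp add: inner_diff_right)
      also have "\<dots> \<le> norm a * norm (q - u)" by (rule Cauchy_Schwarz_ineq2)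
      finally have aq: "\<bar>a \<bullet> q\<bar> \<le> norm a * norm (q - u)" .
      have "q' - u = (q - u) - ((a \<bullet> q) / (a \<bullet> w)) *\<^sub>R w" by (simp add: q'_def)
      then have "norm (q' - u) \<le> norm (q - u) + norm (((a \<bullet> q) / (a \<bullet> w)) *\<^sub>R w)"
        using norm_triangle_ineq4 by metis
      also have "norm (((a \<bullet> q) / (a \<bullet> w)) *\<^sub>R w) = \<bar>a \<bullet> q\<bar> * (norm w / \<bar>a \<bullet> w\<bar>)"
        by (simp add: abs_divide)
      also have "\<dots> \<le> norm a * norm (q - u) * (norm w / \<bar>a \<bullet> w\<bar>)"
        by (rule mult_right_mono[OF aq]) simp
      also have "norm (q - u) + norm a * norm (q - u) * (norm w / \<bar>a \<bullet> w\<bar>) = norm (q - u) * K"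
        by (simp add: K_def ring_distribs)
      also have "\<dots> < e / K * K" using q K by (intro mult_strict_right_mono) auto
      also have "\<dots> = e" using K by simp
      finally show ?thesis by simp
    qed
    ultimately show ?thesis by blast
  qed
qed

lemma common_denom:
  fixes X :: "real set"
  assumes "finite X" "X \<subseteq> \<rat>"
  shows "\<exists>D::int. D > 0 \<and> (\<forall>x\<in>X. of_int D * x \<in> \<int>)"
  using assms
proof (induction X rule: finite_induct)
  case empty then show ?case by (intro exI[of _ 1]) auto
next
  case (insert x X)
  then obtain D :: int where D: "D > 0" "\<forall>y\<in>X. of_int D * y \<in> \<int>" by auto
  from insert.prems have "x \<in> \<rat>" by auto
  then obtain a b :: int where ab: "b > 0" "x = of_int a / of_int b" by (rule Rats_cases') auto
  have "of_int (D * b) * x = of_int (D * a)" using ab by (simp add: field_simps)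
  moreover have "of_int (D * b) * y \<in> \<int>" if "y \<in> X" for y
  proof -
    have "of_int (D * b) * y = of_int b * (of_int D * y)" by simp
    then show ?thesis using D that by (metis Ints_mult Ints_of_int)
  qed
  ultimately show ?case using D ab by (intro exI[of _ "D * b"]) auto
qed

lemma Qv_rvec: "Qv (rvec w)"
  by (simp add: Qv_def rvec_def)

lemma int_expose:
  fixes v :: "nat \<Rightarrow> int ^ 'd"
  assumes "finite T" "F face_of cone_of v T" "F \<noteq> {}"
  shows "\<exists>m. \<forall>i\<in>T. pair m (v i) \<ge> 0 \<and> (pair m (v i) = 0 \<longleftrightarrow> rvec (v i) \<in> F)"
proof -
  obtain u where u: "\<forall>y\<in>cone_of v T. u \<bullet> y \<ge> 0" "F = cone_of v T \<inter> {y. u \<bullet> y = 0}"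
    using real_expose[OF assms] by blast
  define A where "A = rvec ` v ` {i\<in>T. rvec (v i) \<in> F}"
  define P where "P = {i\<in>T. rvec (v i) \<notin> F}"
  define Opn where "Opn = (\<Inter>i\<in>P. {w. rvec (v i) \<bullet> w > 0})"
  have "open Opn" unfolding Opn_def P_def using assms(1) by (intro open_INT) (auto intro: open_halfspace_gt)
  moreover have "u \<in> Opn"
  proof -
    have "rvec (v i) \<bullet> u > 0" if "i \<in> P" for i
    proof -
      have "rvec (v i) \<in> cone_of v T" using that assms(1) by (auto simp: P_def intro: cone_of_inc)
      then show ?thesis using u that by (force simp: P_def inner_commute)
    qed
    then show ?thesis by (auto simp: Opn_def)
  qed
  ultimately obtain e where e: "e > 0" "ball u e \<subseteq> Opn" by (meson open_contains_ball)
  have "\<forall>a\<in>A. a \<bullet> u = 0" using u by (auto simp: A_def inner_commute)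
  moreover have "\<forall>a\<in>A. Qv a" by (auto simp: A_def Qv_rvec)
  moreover have "finite A" using assms(1) by (simp add: A_def)
  ultimately obtain q where q: "Qv q" "\<forall>a\<in>A. a \<bullet> q = 0" "norm (q - u) < e"
    using rat_approx e by blast
  have "q \<in> Opn" using e q by (auto simp: dist_norm norm_minus_commute)
  obtain D :: int where D: "D > 0" "\<forall>x\<in>range (\<lambda>j. q $ j). of_int D * x \<in> \<int>"
    using common_denom[of "range (\<lambda>j. q $ j)"] q(1) by (auto simp: Qv_def)
  define m where "m = (\<chi> j. \<lfloor>of_int D * q $ j\<rfloor>)"
  have mj: "real_of_int (m $ j) = of_int D * q $ j" for j
  proof -
    have "of_int D * q $ j \<in> \<int>" using D(2) by auto
    then obtain z where "of_int D * q $ j = of_int z" by (auto elim: Ints_cases)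
    then show ?thesis by (simp add: m_def)
  qed
  have pm: "real_of_int (pair m w) = of_int D * (rvec w \<bullet> q)" for w
    by (simp add: pair_def rvec_def inner_vec_def mj sum_distrib_left algebra_simps)
  show ?thesis
  proof (intro exI[of _ m] ballI)
    fix i assume i: "i \<in> T"
    show "pair m (v i) \<ge> 0 \<and> (pair m (v i) = 0 \<longleftrightarrow> rvec (v i) \<in> F)"
    proof (cases "rvec (v i) \<in> F")
      case True
      then have "rvec (v i) \<in> A" using i by (auto simp: A_def)
      then have "real_of_int (pair m (v i)) = 0" using q pm by simp
      then show ?thesis using True by simp
    next
      case False
      then have "i \<in> P" using i by (auto simp: P_def)
      then have "rvec (v i) \<bullet> q > 0" using \<open>q \<in> Opn\<close> by (auto simp: Opn_def)
      then have "real_of_int (pair m (v i)) > 0" using pm D by simp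
      then show ?thesis using False by simp
    qed
  qed
qed

lemma fun_tendsto_closed:
  fixes f :: "nat \<Rightarrow> ('a \<Rightarrow> 'b::topological_space)"
  assumes "closed K" "\<forall>k. f k \<in> K" "\<forall>a. (\<lambda>k. f k a) \<longlonglongrightarrow> l a"
  shows "l \<in> K"
proof -
  have "limitin (product_topology (\<lambda>i. euclidean) UNIV) f l sequentially"
    by (simp add: limitin_componentwise assms)
  then have "f \<longlonglongrightarrow> l" by (simp add: euclidean_product_topology)
  then show ?thesis using assms(1,2) by (intro Lim_in_closed_set[of K f]) auto
qed

lemma closed_fun_eq0: "closed {g :: 'a \<Rightarrow> 'b::{t2_space,zero}. g m = 0}"
  by (rule closed_Collect_eq) (auto intro: continuous_on_product_coordinates)

lemma pair_add: "pair (a + b) u = pair a u + pair b u"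
  by (simp add: pair_def sum.distrib algebra_simps)

lemma pair_uminus: "pair (- a) u = - pair a u"
  by (simp add: pair_def sum_negf)

lemma pair_zero: "pair 0 u = 0"
  by (simp add: pair_def)

lemma pair_smult: "pair (c *s a) u = c * pair a u"
  by (simp add: pair_def sum_distrib_left algebra_simps)

lemma rvec_inner: "rvec m \<bullet> rvec u = real_of_int (pair m u)"
  by (simp add: rvec_def pair_def inner_vec_def)

lemma semig_anti: "S \<subseteq> T \<Longrightarrow> semig v T \<subseteq> semig v S"
  by (auto simp: semig_def)

lemma semig_add: "m \<in> semig v T \<Longrightarrow> m' \<in> semig v T \<Longrightarrow> m + m' \<in> semig v T"
  by (auto simp: semig_def pair_add)

lemma semig_0: "0 \<in> semig v T"
  by (auto simp: semig_def pair_zero)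

context
  fixes n :: nat and v :: "nat \<Rightarrow> int ^ 'd" and Sig :: "nat set set"
  assumes SF: "stacky_fan n v Sig"
begin

lemma sf_sub: "T \<in> Sig \<Longrightarrow> T \<subseteq> {..<n}"
  using SF by (auto simp: stacky_fan_def)

lemma sf_fin: "T \<in> Sig \<Longrightarrow> finite T"
  using sf_sub finite_subset by blast

lemma sf_ray: "T \<in> Sig \<Longrightarrow> i < n \<Longrightarrow> cone_of v {i} face_of cone_of v T \<longleftrightarrow> i \<in> T"
  using SF by (auto simp: stacky_fan_def)

lemma sf_face: "T \<in> Sig \<Longrightarrow> F face_of cone_of v T \<Longrightarrow> F \<noteq> {} \<Longrightarrow> \<exists>R\<in>Sig. cone_of v R = F"
  using SF by (auto simp: stacky_fan_def)

lemma sf_int: "T \<in> Sig \<Longrightarrow> T' \<in> Sig \<Longrightarrow> (cone_of v T \<inter> cone_of v T') face_of cone_of v T"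
  using SF by (auto simp: stacky_fan_def)

lemma face_cc:
  assumes "finite T" "F face_of cone_of v T" "F \<noteq> {}"
  shows "convex_cone F"
proof -
  obtain u where u: "F = cone_of v T \<inter> {y. u \<bullet> y = 0}"
    using real_expose[OF assms] by blast
  have "convex_cone {y. u \<bullet> y = 0}" by (auto simp: convex_cone_iff inner_add_right)
  then show ?thesis using u cone_of_cc[OF assms(1)]
    by (auto simp: convex_cone_iff)
qed

lemma sf_ray_in:
  assumes "T \<in> Sig" "R \<in> Sig" "cone_of v R face_of cone_of v T" "i \<in> T" "rvec (v i) \<in> cone_of v R"
  shows "i \<in> R"
proof -
  have i: "i < n" using sf_sub assms by auto
  have "cone_of v {i} \<subseteq> cone_of v R"
    by (rule cone_of_min) (use assms sf_fin in \<open>auto intro: cone_of_cc\<close>)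
  moreover have "cone_of v R \<subseteq> cone_of v T" using assms(3) face_of_imp_subset by blast
  moreover have "cone_of v {i} face_of cone_of v T" using sf_ray assms i by blast
  ultimately have "cone_of v {i} face_of cone_of v R" by (meson face_of_subset)
  then show ?thesis using sf_ray assms(2) i by blast
qed

lemma sf_inter:
  assumes "T \<in> Sig" "T' \<in> Sig"
  shows "T \<inter> T' \<in> Sig \<and> cone_of v (T \<inter> T') = cone_of v T \<inter> cone_of v T'"
proof -
  have f1: "(cone_of v T \<inter> cone_of v T') face_of cone_of v T" using sf_int assms by blast
  have f2: "(cone_of v T \<inter> cone_of v T') face_of cone_of v T'"
    using sf_int[OF assms(2,1)] by (simp add: Int_commute)
  have "0 \<in> cone_of v T \<inter> cone_of v T'" using cone_of_0 sf_fin assms by blast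
  then obtain R where R: "R \<in> Sig" "cone_of v R = cone_of v T \<inter> cone_of v T'"
    using sf_face[OF assms(1) f1] by blast
  have "R = T \<inter> T'"
  proof
    show "R \<subseteq> T \<inter> T'"
    proof
      fix i assume i: "i \<in> R"
      have "i < n" using sf_sub R i by auto
      have "cone_of v {i} face_of cone_of v R" using sf_ray R i \<open>i < n\<close> by blast
      then have "cone_of v {i} face_of cone_of v T" "cone_of v {i} face_of cone_of v T'"
        using R f1 f2 face_of_trans by metis+
      then show "i \<in> T \<inter> T'" using sf_ray assms \<open>i < n\<close> by blast
    qed
  next
    show "T \<inter> T' \<subseteq> R"
    proof
      fix i assume i: "i \<in> T \<inter> T'"
      then have "rvec (v i) \<in> cone_of v R" using R cone_of_inc sf_fin assms by blast
      then show "i \<in> R" using sf_ray_in[OF assms(1) R(1)] R f1 i by auto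
    qed
  qed
  then show ?thesis using R by simp
qed

end

lemma glue_sym: "glue v p p' \<Longrightarrow> glue v p' p"
  unfolding glue_def by (metis Int_commute)

lemma pow_nonneg_add: "(0::int) \<le> a \<Longrightarrow> 0 \<le> b \<Longrightarrow> (x::complex) powi (a + b) = x powi a * x powi b"
  by (cases "x = 0") (auto simp: power_int_add power_int_0_left_if)

lemma qchart_Uset:
  assumes "\<forall>i<n. i \<notin> T \<longrightarrow> z i \<noteq> 0"
  shows "qchart n v T z \<in> Uset v T"
  unfolding Uset_def
proof (intro CollectI conjI ballI allI impI)
  show "qchart n v T z 0 = 1" by (simp add: qchart_def semig_0 pair_zero)
next
  fix m m' assume m: "m \<in> semig v T" "m' \<in> semig v T"
  have "z i powi pair (m + m') (v i) = z i powi pair m (v i) * z i powi pair m' (v i)" if "i < n" for i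
  proof (cases "i \<in> T")
    case True
    then have "pair m (v i) \<ge> 0" "pair m' (v i) \<ge> 0" using m by (auto simp: semig_def)
    then show ?thesis by (simp add: pair_add pow_nonneg_add)
  next
    case False
    then show ?thesis using assms that by (simp add: pair_add power_int_add)
  qed
  then show "qchart n v T z (m + m') = qchart n v T z m * qchart n v T z m'"
    using m semig_add[OF m] by (simp add: qchart_def prod.distrib[symmetric])
next
  fix m assume "m \<notin> semig v T"
  then show "qchart n v T z m = 0" by (simp add: qchart_def)
qed
lemma powk:
  assumes "g \<in> Uset v R" "m' \<in> semig v R" "\<And>k::nat. m' + of_nat k *s m0 \<in> semig v R" "m0 \<in> semig v R"
  shows "g (m' + of_nat k *s m0) = g m' * g m0 ^ k"
proof (induction k)
  case 0 then show ?case by simp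
next
  case (Suc k)
  have eq: "m' + of_nat (Suc k) *s m0 = (m' + of_nat k *s m0) + m0"
    by (simp add: vector_sadd_rdistrib algebra_simps)
  have "g ((m' + of_nat k *s m0) + m0) = g (m' + of_nat k *s m0) * g m0"
    using assms(1) assms(3)[of k] assms(4) unfolding Uset_def by blast
  then have "g (m' + of_nat (Suc k) *s m0) = g (m' + of_nat k *s m0) * g m0" by (simp only: eq)
  then show ?case using Suc by simp
qed
lemma torus_0: "torus_pt t \<Longrightarrow> t 0 = 1"
proof -
  assume t: "torus_pt t"
  have "t (0 + 0) = t 0 * t 0" using t unfolding torus_pt_def by blast
  then have "t 0 * 1 = t 0 * t 0" by simp
  moreover have "t 0 \<noteq> 0" using t unfolding torus_pt_def by blast
  ultimately show "t 0 = 1" by (metis mult_left_cancel)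
qed

lemma gamma_mult:
  assumes m: "m \<in> semig v S" "m' \<in> semig v S"
  shows "gamma_dist v S (m + m') = gamma_dist v S m * gamma_dist v S m'"
proof -
  have e: "pair (m+m') (v i) = 0 \<longleftrightarrow> pair m (v i) = 0 \<and> pair m' (v i) = 0" if "i \<in> S" for i
  proof -
    have "pair m (v i) \<ge> 0" "pair m' (v i) \<ge> 0" using m that by (auto simp: semig_def)
    then show ?thesis unfolding pair_add by arith
  qed
  have mm: "m + m' \<in> semig v S" using semig_add[OF m] .
  show ?thesis
  proof (cases "(\<forall>i\<in>S. pair m (v i) = 0) \<and> (\<forall>i\<in>S. pair m' (v i) = 0)")
    case True
    then have "\<forall>i\<in>S. pair (m+m') (v i) = 0" using e by blast
    then show ?thesis using True m mm unfolding gamma_dist_def by simp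
  next
    case False
    then have "\<not> (\<forall>i\<in>S. pair (m+m') (v i) = 0)" using e by blast
    moreover have "gamma_dist v S m = 0 \<or> gamma_dist v S m' = 0" using False unfolding gamma_dist_def by auto
    ultimately show ?thesis unfolding gamma_dist_def by auto
  qed
qed

lemma gamma_Uset:
  assumes t: "torus_pt t"
  shows "(\<lambda>m. t m * gamma_dist v S m) \<in> Uset v S"
  unfolding Uset_def
proof (intro CollectI conjI ballI allI impI)
  show "t 0 * gamma_dist v S 0 = 1" using torus_0[OF t] by (simp add: gamma_dist_def semig_0 pair_zero)
next
  fix m m' assume m: "m \<in> semig v S" "m' \<in> semig v S"
  have "t (m + m') = t m * t m'" using t unfolding torus_pt_def by blast
  then show "t (m + m') * gamma_dist v S (m + m') = t m * gamma_dist v S m * (t m' * gamma_dist v S m')"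
    using gamma_mult[OF m] by (simp add: algebra_simps)
next
  fix m assume "m \<notin> semig v S" then show "t m * gamma_dist v S m = 0" by (simp add: gamma_dist_def)
qed

context
  fixes n :: nat and v :: "nat \<Rightarrow> int ^ 'd" and Sig :: "nat set set" and S :: "nat set"
  assumes SF: "stacky_fan n v Sig" and SS: "S \<in> Sig"
begin
definition Cset where
  "Cset = {p \<in> Dunion v Sig. S \<subseteq> fst p \<and>
     (\<forall>m\<in>semig v (fst p). (\<exists>i\<in>S. pair m (v i) \<noteq> 0) \<longrightarrow> snd p m = 0)}"
lemma Cset_sat:
  assumes "(T, g) \<in> Cset" "(T', g') \<in> Dunion v Sig" "glue v (T, g) (T', g')"
  shows "(T', g') \<in> Cset"
proof -
  have T: "T \<in> Sig" "g \<in> Uset v T" and T': "T' \<in> Sig" "g' \<in> Uset v T'"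
    using assms by (auto simp: Cset_def Dunion_def)
  have ST: "S \<subseteq> T" and gC: "\<And>m. m \<in> semig v T \<Longrightarrow> (\<exists>i\<in>S. pair m (v i) \<noteq> 0) \<Longrightarrow> g m = 0"
    using assms(1) by (auto simp: Cset_def)
  obtain g'' where g'': "g'' \<in> Uset v (T \<inter> T')" "\<forall>m\<in>semig v T. g m = g'' m" "\<forall>m\<in>semig v T'. g' m = g'' m"
    using assms(3) by (auto simp: glue_def)
  have II: "T \<inter> T' \<in> Sig" "cone_of v (T \<inter> T') = cone_of v T \<inter> cone_of v T'"
    using sf_inter[OF SF T(1) T'(1)] by auto
  have ff: "cone_of v (T \<inter> T') face_of cone_of v T" using II sf_int[OF SF T(1) T'(1)] by simp
  have "0 \<in> cone_of v (T \<inter> T')" using cone_of_0 sf_fin[OF SF II(1)] by blast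
  then obtain m0 where m0: "\<forall>i\<in>T. pair m0 (v i) \<ge> 0 \<and> (pair m0 (v i) = 0 \<longleftrightarrow> rvec (v i) \<in> cone_of v (T \<inter> T'))"
    using int_expose[OF sf_fin[OF SF T(1)] ff] by blast
  have m0z: "pair m0 (v i) = 0 \<longleftrightarrow> i \<in> T'" if "i \<in> T" for i
  proof
    assume "pair m0 (v i) = 0"
    then have "rvec (v i) \<in> cone_of v (T \<inter> T')" using m0 that by blast
    then show "i \<in> T'" using sf_ray_in[OF SF T(1) II(1) ff that] by blast
  next
    assume "i \<in> T'"
    then have "rvec (v i) \<in> cone_of v (T \<inter> T')" using that cone_of_inc sf_fin[OF SF II(1)] by blast
    then show "pair m0 (v i) = 0" using m0 that by blast
  qed
  have m0zero: "pair m0 (v i) = 0" if "i \<in> T" "i \<in> T'" for i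
    using m0z[OF that(1)] that(2) by simp
  have m0pos: "pair m0 (v i) \<ge> 1" if "i \<in> T" "i \<notin> T'" for i
  proof -
    have "pair m0 (v i) \<noteq> 0" using m0z[OF that(1)] that(2) by simp
    moreover have "pair m0 (v i) \<ge> 0" using m0 that(1) by blast
    ultimately show ?thesis by simp
  qed
  have m0T: "m0 \<in> semig v T" using m0 by (auto simp: semig_def)
  have m0R: "m0 \<in> semig v (T \<inter> T')" using m0 by (auto simp: semig_def)
  have nm0R: "- m0 \<in> semig v (T \<inter> T')"
    unfolding semig_def
  proof (intro CollectI ballI)
    fix i assume i: "i \<in> T \<inter> T'"
    then have "pair m0 (v i) = 0" using m0zero by blast
    then show "pair (- m0) (v i) \<ge> 0" by (simp add: pair_uminus)
  qed
  have "g'' (m0 + - m0) = g'' m0 * g'' (- m0)" using g''(1) m0R nm0R unfolding Uset_def by blast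
  then have "g'' m0 * g'' (- m0) = g'' 0" by simp
  also have "\<dots> = 1" using g''(1) by (simp add: Uset_def)
  finally have g0: "g'' m0 \<noteq> 0" by auto
  then have "g m0 \<noteq> 0" using g''(2) m0T by simp
  then have S0: "\<forall>i\<in>S. pair m0 (v i) = 0" using gC m0T by blast
  have ST': "S \<subseteq> T'"
  proof
    fix i assume "i \<in> S"
    then have "i \<in> T" "pair m0 (v i) = 0" using ST S0 by auto
    then show "i \<in> T'" using m0z[of i] by simp
  qed
  have "g' m' = 0" if m': "m' \<in> semig v T'" and j: "j \<in> S" "pair m' (v j) \<noteq> 0" for m' j
  proof -
    define k where "k = nat (\<Sum>i\<in>T. \<bar>pair m' (v i)\<bar>)"
    have kge: "\<bar>pair m' (v i)\<bar> \<le> int k" if "i \<in> T" for i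
    proof -
      have "\<bar>pair m' (v i)\<bar> \<le> (\<Sum>i\<in>T. \<bar>pair m' (v i)\<bar>)"
        using that sf_fin[OF SF T(1)] by (intro member_le_sum) auto
      then show ?thesis by (simp add: k_def)
    qed
    have m'R: "m' \<in> semig v (T \<inter> T')" using m' semig_anti[of "T \<inter> T'" T'] by auto
    have mkR: "m' + of_nat kk *s m0 \<in> semig v (T \<inter> T')" for kk
      unfolding semig_def
    proof (intro CollectI ballI)
      fix i assume i: "i \<in> T \<inter> T'"
      then have "pair m0 (v i) = 0" using m0zero by blast
      moreover have "pair m' (v i) \<ge> 0" using m'R i by (simp add: semig_def)
      ultimately show "pair (m' + of_nat kk *s m0) (v i) \<ge> 0" by (simp add: pair_add pair_smult)
    qed
    define m where "m = m' + of_nat k *s m0"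
    have mT: "m \<in> semig v T"
      unfolding semig_def
    proof (intro CollectI ballI)
      fix i assume i: "i \<in> T"
      show "pair m (v i) \<ge> 0"
      proof (cases "i \<in> T'")
        case True
        then have "pair m0 (v i) = 0" using m0zero i by blast
        moreover have "pair m' (v i) \<ge> 0" using m' True by (simp add: semig_def)
        ultimately show ?thesis by (simp add: m_def pair_add pair_smult)
      next
        case False
        then have "pair m0 (v i) \<ge> 1" using m0pos i by blast
        then have "int k * pair m0 (v i) \<ge> int k" by (simp add: mult_le_cancel_left1)
        moreover have "pair m' (v i) \<ge> - int k" using kge[OF i] by linarith
        ultimately show ?thesis by (simp add: m_def pair_add pair_smult)
      qed
    qed
    have "pair m (v j) \<noteq> 0" using j S0 by (simp add: m_def pair_add pair_smult)
    then have "g m = 0" using gC mT j by blast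
    then have "g'' m = 0" using g''(2) mT by simp
    moreover have "g'' m = g'' m' * g'' m0 ^ k"
      unfolding m_def by (rule powk[OF g''(1) m'R mkR m0R])
    ultimately have "g'' m' = 0" using g0 by simp
    then show "g' m' = 0" using g''(3) m' by simp
  qed
  then show ?thesis using assms(2) ST' by (auto simp: Cset_def)
qed

end

context
  fixes n :: nat and v :: "nat \<Rightarrow> int ^ 'd" and Sig :: "nat set set" and S :: "nat set"
  assumes SF: "stacky_fan n v Sig" and SS: "S \<in> Sig"
begin
lemma Cset_closed: "closedX v Sig (Cset v Sig S)"
  unfolding closedX_def
proof (intro conjI ballI)
  show "(Cset v Sig S) \<subseteq> Dunion v Sig" by (auto simp: Cset_def[OF SF SS])
next
  show "saturated v Sig (Cset v Sig S)" unfolding saturated_def using Cset_sat[OF SF SS] by fast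
next
  fix T assume T: "T \<in> Sig"
  show "closedin (top_of_set (Uset v T)) {g. (T, g) \<in> (Cset v Sig S)}"
  proof (cases "S \<subseteq> T")
    case True
    have "{g. (T, g) \<in> (Cset v Sig S)} = Uset v T \<inter> (\<Inter>m\<in>{m\<in>semig v T. \<exists>i\<in>S. pair m (v i) \<noteq> 0}. {g. g m = 0})"
      using T True by (auto simp: Cset_def[OF SF SS] Dunion_def)
    then show ?thesis
      by (simp add: closedin_closed_Int closed_INT closed_fun_eq0)
  next
    case False
    then have "{g. (T, g) \<in> (Cset v Sig S)} = {}" by (auto simp: Cset_def[OF SF SS])
    then show ?thesis by simp
  qed
qed

lemma orbit_Cset: "orbit_pts v Sig S \<subseteq> (Cset v Sig S)"
proof
  fix p assume "p \<in> orbit_pts v Sig S"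
  then obtain t where p: "p \<in> Dunion v Sig" "torus_pt t" "glue v p (S, \<lambda>m. t m * gamma_dist v S m)"
    by (auto simp: orbit_pts_def)
  have c: "(S, \<lambda>m. t m * gamma_dist v S m) \<in> (Cset v Sig S)"
    using gamma_Uset[OF p(2)] SS by (auto simp: Cset_def[OF SF SS] Dunion_def gamma_dist_def)
  obtain T g where pTg: "p = (T, g)" by (cases p)
  have gl: "glue v (S, \<lambda>m. t m * gamma_dist v S m) (T, g)" using glue_sym p(3) pTg by blast
  have "(T, g) \<in> Cset v Sig S" using Cset_sat[OF SF SS c _ gl] p(1) pTg by blast
  then show "p \<in> (Cset v Sig S)" using pTg by simp
qed

lemma Vorb_Cset: "Vorb v Sig S \<subseteq> (Cset v Sig S)"
  unfolding Vorb_def using Cset_closed orbit_Cset by blast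

end

lemma Vorb_mem:
  fixes n :: nat and v :: "nat \<Rightarrow> int ^ 'd" and Sig :: "nat set set" and S :: "nat set"
  assumes SF: "stacky_fan n v Sig" and SS: "S \<in> Sig" and T0: "T0 \<in> Sig" and ST: "S \<subseteq> T0"
    and xz: "\<forall>i<n. i \<notin> T0 \<longrightarrow> x i \<noteq> 0"
    and H: "\<forall>m\<in>semig v T0. (\<exists>i\<in>S. pair m (v i) \<noteq> 0) \<longrightarrow> qchart n v T0 x m = 0"
  shows "(T0, qchart n v T0 x) \<in> Vorb v Sig S"
proof -
  define y where "y k i = (if i \<in> S then 0 else if x i \<noteq> 0 then x i
      else complex_of_real (inverse (real (Suc k))))" for k :: nat and i
  have cnz: "(1::complex) + of_nat k \<noteq> 0" for k
    using of_nat_neq_0[of k, where ?'a=complex] by (simp add: add.commute)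
  have ynz: "y k i \<noteq> 0" if "i \<notin> S" for k i using that cnz by (simp add: y_def)
  have Sn: "S \<subseteq> {..<n}" using sf_sub[OF SF SS] .
  have orb: "(T0, qchart n v T0 (y k)) \<in> orbit_pts v Sig S" for k
  proof -
    define t where "t m = (\<Prod>i\<in>{..<n} - S. y k i powi pair m (v i))" for m
    have tt: "torus_pt t"
      unfolding torus_pt_def
    proof (intro conjI allI)
      fix m show "t m \<noteq> 0" unfolding t_def using ynz by (simp add: prod_zero_iff)
    next
      fix m m' show "t (m + m') = t m * t m'" unfolding t_def
        using ynz by (simp add: pair_add power_int_add prod.distrib[symmetric])
    qed
    have yU: "qchart n v T0 (y k) \<in> Uset v T0" using ST ynz by (intro qchart_Uset) auto
    have yUS: "qchart n v S (y k) \<in> Uset v S" using ynz by (intro qchart_Uset) auto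
    have e1: "\<forall>m\<in>semig v T0. qchart n v T0 (y k) m = qchart n v S (y k) m"
      using semig_anti[OF ST] by (auto simp: qchart_def)
    have e2: "t m * gamma_dist v S m = qchart n v S (y k) m" if m: "m \<in> semig v S" for m
    proof (cases "\<forall>i\<in>S. pair m (v i) = 0")
      case True
      have "qchart n v S (y k) m = (\<Prod>i<n. y k i powi pair m (v i))" using m by (simp add: qchart_def)
      also have "\<dots> = t m" unfolding t_def
        by (rule prod.mono_neutral_right) (use True in auto)
      finally show ?thesis using True m by (simp add: gamma_dist_def)
    next
      case False
      then obtain j where j: "j \<in> S" "pair m (v j) \<noteq> 0" by blast
      have "j < n" using j Sn by auto
      have "y k j powi pair m (v j) = 0" using j by (simp add: y_def)
      then have "(\<Prod>i<n. y k i powi pair m (v i)) = 0" using \<open>j < n\<close>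
        by (meson finite_lessThan lessThan_iff prod_zero)
      then have "qchart n v S (y k) m = 0" using m by (simp add: qchart_def)
      moreover have "gamma_dist v S m = 0" using False by (simp add: gamma_dist_def)
      ultimately show ?thesis by simp
    qed
    have "glue v (T0, qchart n v T0 (y k)) (S, \<lambda>m. t m * gamma_dist v S m)"
      unfolding glue_def using ST yUS e1 e2
      by (intro bexI[of _ "qchart n v S (y k)"]) (auto simp: Int_absorb1)
    then show ?thesis unfolding orbit_pts_def using tt yU T0 by (auto simp: Dunion_def)
  qed
  have lim: "(\<lambda>k. qchart n v T0 (y k) m) \<longlonglongrightarrow> qchart n v T0 x m" for m
  proof (cases "m \<in> semig v T0")
    case False then show ?thesis by (simp add: qchart_def)
  next
    case mT: True
    show ?thesis
    proof (cases "\<exists>j\<in>S. pair m (v j) \<noteq> 0")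
      case True
      then obtain j where j: "j \<in> S" "pair m (v j) \<noteq> 0" by blast
      have "j < n" using j Sn by auto
      have "qchart n v T0 (y k) m = 0" for k
      proof -
        have "y k j powi pair m (v j) = 0" using j by (simp add: y_def)
        then have "(\<Prod>i<n. y k i powi pair m (v i)) = 0" using \<open>j < n\<close>
          by (meson finite_lessThan lessThan_iff prod_zero)
        then show ?thesis using mT by (simp add: qchart_def)
      qed
      moreover have "qchart n v T0 x m = 0" using H mT True by blast
      ultimately show ?thesis by simp
    next
      case False
      have fac: "(\<lambda>k. y k i powi pair m (v i)) \<longlonglongrightarrow> x i powi pair m (v i)" if i: "i < n" for i
      proof (cases "i \<in> S")
        case True then show ?thesis using False by (simp add: y_def)
      next
        case iS: False
        show ?thesis
        proof (cases "x i = 0")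
          case False then show ?thesis using iS by (simp add: y_def)
        next
          case True
          then have "i \<in> T0" using xz i by blast
          then have "pair m (v i) \<ge> 0" using mT by (simp add: semig_def)
          then obtain d where d: "pair m (v i) = int d" by (metis nonneg_int_cases)
          have "(\<lambda>k. complex_of_real (inverse (real (Suc k))) ^ d) \<longlonglongrightarrow> complex_of_real 0 ^ d"
            by (intro tendsto_power tendsto_of_real LIMSEQ_inverse_real_of_nat)
          then show ?thesis using iS True d by (simp add: y_def)
        qed
      qed
      have "(\<lambda>k. \<Prod>i<n. y k i powi pair m (v i)) \<longlonglongrightarrow> (\<Prod>i<n. x i powi pair m (v i))"
        by (rule tendsto_prod) (use fac in auto)
      then show ?thesis using mT by (simp add: qchart_def)
    qed
  qed
  show ?thesis
    unfolding Vorb_def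
  proof (intro InterI, clarify)
    fix C assume C: "closedX v Sig C" "orbit_pts v Sig S \<subseteq> C"
    have "closedin (top_of_set (Uset v T0)) {g. (T0, g) \<in> C}" using C(1) T0 by (simp add: closedX_def)
    then obtain K where K: "closed K" "{g. (T0, g) \<in> C} = Uset v T0 \<inter> K" by (auto simp: closedin_closed)
    have "\<forall>k. qchart n v T0 (y k) \<in> K" using orb C(2) K(2) by blast
    moreover have "\<forall>m. (\<lambda>k. qchart n v T0 (y k) m) \<longlonglongrightarrow> qchart n v T0 x m" using lim by blast
    ultimately have "qchart n v T0 x \<in> K"
      by (rule fun_tendsto_closed[OF K(1), of "\<lambda>k. qchart n v T0 (y k)" "qchart n v T0 x"])
    moreover have "qchart n v T0 x \<in> Uset v T0" using xz by (intro qchart_Uset) auto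
    ultimately show "(T0, qchart n v T0 x) \<in> C" using K(2) by blast
  qed
qed

lemma LtoR:
  fixes n :: nat and v :: "nat \<Rightarrow> int ^ 'd" and Sig :: "nat set set" and S :: "nat set"
  assumes SF: "stacky_fan n v Sig" and SS: "S \<in> Sig" and x: "x \<in> Ltilde n v Sig S"
  shows "x \<in> zero_set (Itilde n v Sig S)"
proof -
  obtain T where T: "T \<in> Sig" "\<forall>i\<in>{..<n} - T. x i \<noteq> 0" "(T, qchart n v T x) \<in> Vorb v Sig S"
    using x by (auto simp: Ltilde_def)
  have "(T, qchart n v T x) \<in> Cset v Sig S" using Vorb_Cset[OF SF SS] T(3) by blast
  then have ST: "S \<subseteq> T" and H: "\<forall>m\<in>semig v T. (\<exists>i\<in>S. pair m (v i) \<noteq> 0) \<longrightarrow> qchart n v T x m = 0"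
    by (auto simp: Cset_def[OF SF SS])
  have finT: "finite T" using sf_fin[OF SF T(1)] .
  have finS: "finite S" using sf_fin[OF SF SS] .
  have TM: "T \<in> {M\<in>Sig. cone_of v S \<subseteq> cone_of v T}" using T(1) cone_of_mono[OF finT ST] by blast
  show ?thesis unfolding zero_set_def
  proof (intro CollectI ballI)
    fix p assume "p \<in> Itilde n v Sig S"
    then have p: "p \<in> Imu n v Sig T S" using TM unfolding Itilde_def by blast
    show "peval p x = 0"
    proof (rule gen_ideal_vanish[of _ x, OF _ p[unfolded Imu_def]], intro ballI)
      fix g assume "g \<in> {monom_set (T - T') | T'. T' \<in> Sig \<and>
          cone_of v T' face_of cone_of v T \<and> cone_of v T' \<noteq> cone_of v T \<and> \<not> cone_of v S \<subseteq> cone_of v T'}"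
      then obtain T' where g: "g = monom_set (T - T')" "T' \<in> Sig" "cone_of v T' face_of cone_of v T"
        "\<not> cone_of v S \<subseteq> cone_of v T'" by blast
      have finT': "finite T'" using sf_fin[OF SF g(2)] .
      have "\<exists>i0\<in>T - T'. x i0 = 0"
      proof (rule ccontr)
        assume nz: "\<not> (\<exists>i0\<in>T - T'. x i0 = 0)"
        have "cone_of v T' \<noteq> {}" using cone_of_0[OF finT'] by blast
        then obtain m where m: "\<forall>i\<in>T. pair m (v i) \<ge> 0 \<and> (pair m (v i) = 0 \<longleftrightarrow> rvec (v i) \<in> cone_of v T')"
          using int_expose[OF finT g(3)] by blast
        have mT: "m \<in> semig v T" using m by (simp add: semig_def)
        have "x i powi pair m (v i) \<noteq> 0" if "i < n" for i
        proof (cases "x i = 0")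
          case False then show ?thesis by simp
        next
          case True
          then have "i \<in> T" using T(2) that by blast
          moreover then have "i \<in> T'" using nz True by blast
          ultimately have "rvec (v i) \<in> cone_of v T'" using cone_of_inc[OF finT'] by blast
          then have "pair m (v i) = 0" using m \<open>i \<in> T\<close> by blast
          then show ?thesis by simp
        qed
        then have "qchart n v T x m \<noteq> 0" using mT by (simp add: qchart_def prod_zero_iff)
        then have S0: "\<forall>j\<in>S. pair m (v j) = 0" using H mT by blast
        have "\<forall>j\<in>S. rvec (v j) \<in> cone_of v T'"
        proof
          fix j assume "j \<in> S"
          then have "j \<in> T" "pair m (v j) = 0" using ST S0 by auto
          then show "rvec (v j) \<in> cone_of v T'" using m by blast
        qed
        then have "cone_of v S \<subseteq> cone_of v T'"
          using cone_of_min[OF finS cone_of_cc[OF finT']] by blast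
        then show False using g(4) by blast
      qed
      then obtain i0 where "i0 \<in> T - T'" "x i0 = 0" by blast
      then show "\<exists>A i0. g = monom_set A \<and> finite A \<and> i0 \<in> A \<and> x i0 = 0"
        using g(1) finT by blast
    qed
  qed
qed

lemma step1:
  fixes n :: nat and v :: "nat \<Rightarrow> int ^ 'd" and Sig :: "nat set set" and S :: "nat set"
  assumes SF: "stacky_fan n v Sig" and SS: "S \<in> Sig" and x: "x \<in> zero_set (Itilde n v Sig S)"
  shows "\<exists>M\<in>Sig. cone_of v S \<subseteq> cone_of v M \<and> (\<forall>T'\<in>Sig. cone_of v T' face_of cone_of v M \<and>
     cone_of v T' \<noteq> cone_of v M \<and> \<not> cone_of v S \<subseteq> cone_of v T' \<longrightarrow> (\<exists>i\<in>M - T'. x i = 0))"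
proof (rule ccontr)
  define Ms where "Ms = {M\<in>Sig. cone_of v S \<subseteq> cone_of v M}"
  define Q where "Q M T' \<longleftrightarrow> T' \<in> Sig \<and> cone_of v T' face_of cone_of v M \<and>
     cone_of v T' \<noteq> cone_of v M \<and> \<not> cone_of v S \<subseteq> cone_of v T' \<and> (\<forall>i\<in>M - T'. x i \<noteq> 0)" for M T'
  assume "\<not> ?thesis"
  then have "\<forall>M\<in>Ms. \<exists>T'. Q M T'" unfolding Ms_def Q_def by blast
  then obtain f where f: "\<forall>M\<in>Ms. Q M (f M)" by metis
  define U where "U = (\<Union>M\<in>Ms. M - f M)"
  have Usub: "U \<subseteq> {..<n}" using sf_sub[OF SF] by (auto simp: U_def Ms_def)
  then have finU: "finite U" using finite_subset by blast
  have Unz: "\<forall>i\<in>U. x i \<noteq> 0" using f by (auto simp: U_def Q_def)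
  have Ppol: "monom_set U \<in> polys n" using monom_set_polys[OF Usub finU] .
  have "monom_set U \<in> Imu n v Sig M S" if M: "M \<in> Ms" for M
  proof -
    define A where "A = M - f M"
    have AU: "A \<subseteq> U" using M by (auto simp: U_def A_def)
    have finA: "finite A" using AU finU finite_subset by blast
    have d1: "(U - A) \<inter> A = {}" by blast
    have d2: "(U - A) \<union> A = U" using AU by blast
    have "monom_set U = monom_set (U - A) * monom_set A"
      using monom_set_union[of "U - A" A] finU finA d1 unfolding d2 by simp
    moreover have "monom_set (U - A) \<in> polys n" using Usub finU by (intro monom_set_polys) auto
    moreover have "monom_set A \<in> {monom_set (M - T) | T. T \<in> Sig \<and>
      cone_of v T face_of cone_of v M \<and> cone_of v T \<noteq> cone_of v M \<and> \<not> cone_of v S \<subseteq> cone_of v T}"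
      using f M unfolding Q_def A_def by blast
    ultimately show ?thesis unfolding Imu_def gen_ideal_def
      by (intro CollectI exI[of _ "{monom_set A}"] exI[of _ "\<lambda>_. monom_set (U - A)"]) auto
  qed
  then have "monom_set U \<in> Itilde n v Sig S" using Ppol unfolding Itilde_def Ms_def by blast
  then have "peval (monom_set U) x = 0" using x by (auto simp: zero_set_def)
  moreover have "peval (monom_set U) x \<noteq> 0" using Unz finU by (simp add: peval_monom_set prod_zero_iff)
  ultimately show False by simp
qed

lemma RtoL:
  fixes n :: nat and v :: "nat \<Rightarrow> int ^ 'd" and Sig :: "nat set set" and S :: "nat set"
  assumes SF: "stacky_fan n v Sig" and SS: "S \<in> Sig" and x: "x \<in> zero_set (Itilde n v Sig S)"
    and xC: "x \<in> Cox n Sig"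
  shows "x \<in> Ltilde n v Sig S"
proof -
  obtain T0 where T0: "T0 \<in> Sig" "(\<Prod>i\<in>{..<n} - T0. x i) \<noteq> 0" using xC by (auto simp: Cox_def)
  have xz: "\<forall>i\<in>{..<n} - T0. x i \<noteq> 0" using T0(2) by (simp add: prod_zero_iff)
  have finT0: "finite T0" using sf_fin[OF SF T0(1)] .
  have finS: "finite S" using sf_fin[OF SF SS] .
  obtain M where M: "M \<in> Sig" "cone_of v S \<subseteq> cone_of v M"
    and MP: "\<And>T'. T' \<in> Sig \<Longrightarrow> cone_of v T' face_of cone_of v M \<Longrightarrow>
     cone_of v T' \<noteq> cone_of v M \<Longrightarrow> \<not> cone_of v S \<subseteq> cone_of v T' \<Longrightarrow> (\<exists>i\<in>M - T'. x i = 0)"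
    using step1[OF SF SS x] by blast
  have finM: "finite M" using sf_fin[OF SF M(1)] .
  have lemA: "cone_of v S \<subseteq> F" if F: "F face_of cone_of v T0" "F \<noteq> {}"
     and Z: "\<forall>i<n. x i = 0 \<longrightarrow> rvec (v i) \<in> F" for F
  proof -
    define G where "G = F \<inter> (cone_of v T0 \<inter> cone_of v M)"
    have f1: "(cone_of v T0 \<inter> cone_of v M) face_of cone_of v T0" using sf_int[OF SF T0(1) M(1)] .
    have f2: "(cone_of v T0 \<inter> cone_of v M) face_of cone_of v M"
      using sf_int[OF SF M(1) T0(1)] by (simp add: Int_commute)
    have "G face_of cone_of v T0" unfolding G_def using face_of_Int[OF F(1) f1] .
    then have "G face_of (cone_of v T0 \<inter> cone_of v M)"
      by (rule face_of_subset) (auto simp: G_def)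
    then have GM: "G face_of cone_of v M" using f2 face_of_trans by blast
    have "0 \<in> F" using face_cc[OF SF finT0 F(1,2)] convex_cone_contains_0 by blast
    then have "0 \<in> G" using cone_of_0[OF finT0] cone_of_0[OF finM] by (auto simp: G_def)
    then obtain R where R: "R \<in> Sig" "cone_of v R = G" using sf_face[OF SF M(1) GM] by blast
    show ?thesis
    proof (cases "G = cone_of v M")
      case True
      then show ?thesis using M(2) by (auto simp: G_def)
    next
      case False
      show ?thesis
      proof (rule ccontr)
        assume nS: "\<not> cone_of v S \<subseteq> F"
        then have "\<not> cone_of v S \<subseteq> cone_of v R" using R by (auto simp: G_def)
        then obtain i where i: "i \<in> M - R" "x i = 0" using MP[OF R(1)] R GM False by auto
        have "i < n" using sf_sub[OF SF M(1)] i by auto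
        then have "rvec (v i) \<in> F" using Z i by blast
        moreover have "rvec (v i) \<in> cone_of v M" using cone_of_inc[OF finM] i by blast
        moreover have "i \<in> T0" using xz i \<open>i < n\<close> by blast
        then have "rvec (v i) \<in> cone_of v T0" using cone_of_inc[OF finT0] by blast
        ultimately have "rvec (v i) \<in> cone_of v R" using R by (auto simp: G_def)
        then have "i \<in> R" using sf_ray_in[OF SF M(1) R(1)] R GM i by blast
        then show False using i by blast
      qed
    qed
  qed
  have ccT0: "convex_cone (cone_of v T0)" using cone_of_cc[OF finT0] .
  have "cone_of v S \<subseteq> cone_of v T0"
  proof (rule lemA)
    show "cone_of v T0 face_of cone_of v T0" using ccT0 by (simp add: convex_cone_def face_of_refl)
    show "cone_of v T0 \<noteq> {}" using cone_of_0[OF finT0] by blast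
    show "\<forall>i<n. x i = 0 \<longrightarrow> rvec (v i) \<in> cone_of v T0" using xz cone_of_inc[OF finT0] by blast
  qed
  then have SinT0: "cone_of v S \<inter> cone_of v T0 = cone_of v S" by blast
  have ST: "S \<subseteq> T0"
  proof
    fix j assume j: "j \<in> S"
    have "j < n" using sf_sub[OF SF SS] j by auto
    have "cone_of v {j} face_of cone_of v S" using sf_ray[OF SF SS \<open>j < n\<close>] j by blast
    moreover have "cone_of v S face_of cone_of v T0" using sf_int[OF SF T0(1) SS] unfolding Int_commute[of "cone_of v T0"] SinT0 .
    ultimately have "cone_of v {j} face_of cone_of v T0" by (rule face_of_trans)
    then show "j \<in> T0" using sf_ray[OF SF T0(1) \<open>j < n\<close>] by blast
  qed
  have H: "\<forall>m\<in>semig v T0. (\<exists>i\<in>S. pair m (v i) \<noteq> 0) \<longrightarrow> qchart n v T0 x m = 0"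
  proof (intro ballI impI)
    fix m assume mT: "m \<in> semig v T0" and "\<exists>i\<in>S. pair m (v i) \<noteq> 0"
    then obtain j where j: "j \<in> S" "pair m (v j) \<noteq> 0" by blast
    show "qchart n v T0 x m = 0"
    proof (rule ccontr)
      assume nz: "qchart n v T0 x m \<noteq> 0"
      have zz: "pair m (v i) = 0" if "i < n" "x i = 0" for i
      proof -
        have "(\<Prod>i<n. x i powi pair m (v i)) \<noteq> 0" using nz mT by (simp add: qchart_def)
        then have "x i powi pair m (v i) \<noteq> 0" using that(1) by (simp add: prod_zero_iff)
        then show ?thesis using that(2) by simp
      qed
      have ge: "\<forall>y\<in>cone_of v T0. rvec m \<bullet> y \<ge> 0"
      proof -
        have "cone_of v T0 \<subseteq> {y. rvec m \<bullet> y \<ge> 0}"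
          by (rule cone_of_min[OF finT0 convex_cone_halfspace_ge])
             (use mT in \<open>auto simp: semig_def rvec_inner\<close>)
        then show ?thesis by blast
      qed
      define F where "F = cone_of v T0 \<inter> {y. (- rvec m) \<bullet> y = 0}"
      have Ff: "F face_of cone_of v T0" unfolding F_def
        by (rule face_of_Int_supporting_hyperplane_le) (use ccT0 ge in \<open>auto simp: convex_cone_def\<close>)
      have "0 \<in> F" using cone_of_0[OF finT0] by (simp add: F_def)
      then have Fne: "F \<noteq> {}" by blast
      have "\<forall>i<n. x i = 0 \<longrightarrow> rvec (v i) \<in> F"
      proof (intro allI impI)
        fix i assume i: "i < n" "x i = 0"
        then have "i \<in> T0" using xz by blast
        then have "rvec (v i) \<in> cone_of v T0" using cone_of_inc[OF finT0] by blast
        then show "rvec (v i) \<in> F" using zz[OF i] by (simp add: F_def rvec_inner)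
      qed
      then have "cone_of v S \<subseteq> F" using lemA[OF Ff Fne] by blast
      then have "rvec (v j) \<in> F" using cone_of_inc[OF finS] j by blast
      then have "pair m (v j) = 0" by (simp add: F_def rvec_inner)
      then show False using j by simp
    qed
  qed
  have xz': "\<forall>i<n. i \<notin> T0 \<longrightarrow> x i \<noteq> 0" using xz by blast
  have "(T0, qchart n v T0 x) \<in> Vorb v Sig S" using Vorb_mem[OF SF SS T0(1) ST xz' H] .
  then show ?thesis using xC T0(1) xz unfolding Ltilde_def by blast
qed

theorem proposition3p7:
  fixes n :: nat and v :: "nat \<Rightarrow> int ^ 'd" and Sig :: "nat set set" and S :: "nat set"
  assumes "stacky_fan n v Sig" and "S \<in> Sig"
  shows "Ltilde n v Sig S = zero_set (Itilde n v Sig S) \<inter> Cox n Sig"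
proof
  show "Ltilde n v Sig S \<subseteq> zero_set (Itilde n v Sig S) \<inter> Cox n Sig"
    using LtoR[OF assms] by (auto simp: Ltilde_def)
  show "zero_set (Itilde n v Sig S) \<inter> Cox n Sig \<subseteq> Ltilde n v Sig S"
    using RtoL[OF assms] by blast
qed

end
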